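(* Let $G$ be a Ricci-flat graph that contains no edge $(u,v)$ with $d(u)=d(v)=2$. Then every edge of $G$ is contained in a cycle of length $3$, or a cycle of length $4$, or a cycle of length $5$.
   Context: All graphs are simple (no loops or multiple edges), undirected, connected and locally finite; $d(x)$ is the degree of $x$, $d(x,y)$ the graph distance, and $\Gamma(x)$ the set of neighbours of $x$. For a vertex $x$ and $\alpha\in[0,1]$ let $\mu_x^\alpha$ be the probability measure with $\mu_x^\alpha(x)=\alpha$, $\mu_x^\alpha(z)=\frac{1-\alpha}{d(x)}$ for $z\sim x$, and $0$ otherwise. The transportation distance is $W(\mu_1,\mu_2)=\inf_A\sum_{u,v}A(u,v)d(u,v)$ over all couplings $A$ of $\mu_1,\mu_2$ (i.e. $A:V\times V\to[0,1]$ with finite support, $\sum_v A(u,v)=\mu_1(u)$, $\sum_u A(u,v)=\mu_2(v)$). Set $k_\alpha(x,y)=1-W(\mu_x^\alpha,\mu_y^\alpha)/d(x,y)$ and define the (Lin–Lu–Yau) Ricci curvature $k(x,y)=\lim_{\alpha\to1}k_\alpha(x,y)/(1-\alpha)$. A graph is Ricci-flat if $k(x,y)=0$ for every edge $(x,y)$. An edge is contained in a cycle of length $\ell$ if some cycle subgraph of $G$ with $\ell$ vertices uses that edge. *)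

theory Defs
  imports "HOL-Analysis.Analysis"
begin

text \<open>A graph on the vertex type 'a (all elements of 'a are vertices), given by an
  adjacency relation E: simple (symmetric, irreflexive), locally finite, connected.\<close>
definition graph :: "('a \<Rightarrow> 'a \<Rightarrow> bool) \<Rightarrow> bool" where
  "graph E \<longleftrightarrow> (\<forall>x y. E x y \<longrightarrow> E y x) \<and> (\<forall>x. \<not> E x x)
     \<and> (\<forall>x. finite {y. E x y}) \<and> (\<forall>x y. E\<^sup>*\<^sup>* x y)"

definition deg :: "('a \<Rightarrow> 'a \<Rightarrow> bool) \<Rightarrow> 'a \<Rightarrow> nat" where
  "deg E x = card {y. E x y}"

definition gdist :: "('a \<Rightarrow> 'a \<Rightarrow> bool) \<Rightarrow> 'a \<Rightarrow> 'a \<Rightarrow> nat" where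
  "gdist E x y = (LEAST n. (E ^^ n) x y)"

definition mu :: "('a \<Rightarrow> 'a \<Rightarrow> bool) \<Rightarrow> real \<Rightarrow> 'a \<Rightarrow> 'a \<Rightarrow> real" where
  "mu E \<alpha> x z = (if z = x then \<alpha> else if E x z then (1 - \<alpha>) / real (deg E x) else 0)"

definition supp2 :: "('a \<Rightarrow> 'a \<Rightarrow> real) \<Rightarrow> ('a \<times> 'a) set" where
  "supp2 A = {p. A (fst p) (snd p) \<noteq> 0}"

definition coupling :: "('a \<Rightarrow> real) \<Rightarrow> ('a \<Rightarrow> real) \<Rightarrow> ('a \<Rightarrow> 'a \<Rightarrow> real) \<Rightarrow> bool" where
  "coupling m1 m2 A \<longleftrightarrow> (\<forall>u v. 0 \<le> A u v \<and> A u v \<le> 1) \<and> finite (supp2 A)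
     \<and> (\<forall>u. (\<Sum>v\<in>{v. A u v \<noteq> 0}. A u v) = m1 u)
     \<and> (\<forall>v. (\<Sum>u\<in>{u. A u v \<noteq> 0}. A u v) = m2 v)"

definition transport_cost :: "('a \<Rightarrow> 'a \<Rightarrow> bool) \<Rightarrow> ('a \<Rightarrow> 'a \<Rightarrow> real) \<Rightarrow> real" where
  "transport_cost E A = (\<Sum>p\<in>supp2 A. A (fst p) (snd p) * real (gdist E (fst p) (snd p)))"

definition transport_dist :: "('a \<Rightarrow> 'a \<Rightarrow> bool) \<Rightarrow> ('a \<Rightarrow> real) \<Rightarrow> ('a \<Rightarrow> real) \<Rightarrow> real" where
  "transport_dist E m1 m2 = Inf {transport_cost E A | A. coupling m1 m2 A}"

definition kappa_alpha :: "('a \<Rightarrow> 'a \<Rightarrow> bool) \<Rightarrow> real \<Rightarrow> 'a \<Rightarrow> 'a \<Rightarrow> real" where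
  "kappa_alpha E \<alpha> x y = 1 - transport_dist E (mu E \<alpha> x) (mu E \<alpha> y) / real (gdist E x y)"

definition ricci :: "('a \<Rightarrow> 'a \<Rightarrow> bool) \<Rightarrow> 'a \<Rightarrow> 'a \<Rightarrow> real" where
  "ricci E x y = Lim (at_left 1) (\<lambda>\<alpha>. kappa_alpha E \<alpha> x y / (1 - \<alpha>))"

definition ricci_flat :: "('a \<Rightarrow> 'a \<Rightarrow> bool) \<Rightarrow> bool" where
  "ricci_flat E \<longleftrightarrow> (\<forall>x y. E x y \<longrightarrow> ricci E x y = 0)"

definition edge_in_cycle :: "('a \<Rightarrow> 'a \<Rightarrow> bool) \<Rightarrow> 'a \<Rightarrow> 'a \<Rightarrow> nat \<Rightarrow> bool" where
  "edge_in_cycle E u v l \<longleftrightarrow> E u v \<and> 3 \<le> l \<and> (\<exists>xs. length xs = l \<and> distinct xs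
     \<and> hd xs = u \<and> last xs = v \<and> (\<forall>i. Suc i < l \<longrightarrow> E (xs ! i) (xs ! Suc i)))"

end

theory Submission
  imports Defs
begin

lemma coupling_fin_row:
  assumes "coupling m1 m2 A" shows "finite {v. A u v \<noteq> 0}"
proof -
  have "{v. A u v \<noteq> 0} \<subseteq> snd ` supp2 A" by (auto simp: supp2_def intro!: image_eqI[where x="(u, _)"])
  moreover have "finite (supp2 A)" using assms by (simp add: coupling_def)
  ultimately show ?thesis by (meson finite_surj)
qed

lemma coupling_fin_col:
  assumes "coupling m1 m2 A" shows "finite {u. A u v \<noteq> 0}"
proof -
  have "{u. A u v \<noteq> 0} \<subseteq> fst ` supp2 A" by (auto simp: supp2_def intro!: image_eqI[where x="(_, v)"])
  moreover have "finite (supp2 A)" using assms by (simp add: coupling_def)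
  ultimately show ?thesis by (meson finite_surj)
qed

lemma coupling_pos:
  assumes c: "coupling m1 m2 A" and nz: "A u v \<noteq> 0"
  shows "m1 u \<noteq> 0 \<and> m2 v \<noteq> 0"
proof -
  have nn: "\<And>u v. 0 \<le> A u v" using c by (simp add: coupling_def)
  have p: "A u v > 0" using nn[of u v] nz by simp
  have "A u v \<le> (\<Sum>w\<in>{w. A u w \<noteq> 0}. A u w)"
    by (rule member_le_sum) (use nz nn coupling_fin_row[OF c] in auto)
  hence 1: "m1 u \<noteq> 0" using c p by (simp add: coupling_def)
  have "A u v \<le> (\<Sum>w\<in>{w. A w v \<noteq> 0}. A w v)"
    by (rule member_le_sum) (use nz nn coupling_fin_col[OF c] in auto)
  hence 2: "m2 v \<noteq> 0" using c p by (simp add: coupling_def)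
  show ?thesis using 1 2 by simp
qed

lemma sum_nz_eq:
  fixes F :: "'b \<Rightarrow> real"
  assumes "finite D" "{v. F v \<noteq> 0} \<subseteq> D"
  shows "(\<Sum>v\<in>{v. F v \<noteq> 0}. F v) = (\<Sum>v\<in>D. F v)"
  by (rule sum.mono_neutral_left) (use assms in auto)

lemma coupling_sum:
  fixes g h :: "'a \<Rightarrow> real"
  assumes c: "coupling m1 m2 A" and D: "finite D" and S: "supp2 A \<subseteq> D \<times> D"
  shows "(\<Sum>p\<in>supp2 A. A (fst p) (snd p) * (g (fst p) - h (snd p)))
      = (\<Sum>u\<in>D. g u * m1 u) - (\<Sum>v\<in>D. h v * m2 v)"
proof -
  have SD: "A u v \<noteq> 0 \<Longrightarrow> u \<in> D \<and> v \<in> D" for u v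
  proof -
    assume "A u v \<noteq> 0"
    hence "(u, v) \<in> supp2 A" by (simp add: supp2_def)
    thus ?thesis using S by blast
  qed
  have row: "m1 u = (\<Sum>v\<in>D. A u v)" for u
  proof -
    have "m1 u = (\<Sum>v\<in>{v. A u v \<noteq> 0}. A u v)" using c by (simp add: coupling_def)
    also have "\<dots> = (\<Sum>v\<in>D. A u v)"
      by (rule sum_nz_eq[OF D]) (use SD in auto)
    finally show ?thesis .
  qed
  have col: "m2 v = (\<Sum>u\<in>D. A u v)" for v
  proof -
    have "m2 v = (\<Sum>u\<in>{u. A u v \<noteq> 0}. A u v)" using c by (simp add: coupling_def)
    also have "\<dots> = (\<Sum>u\<in>D. A u v)"
      by (rule sum_nz_eq[OF D]) (use SD in auto)
    finally show ?thesis .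
  qed
  have "(\<Sum>p\<in>supp2 A. A (fst p) (snd p) * (g (fst p) - h (snd p)))
      = (\<Sum>p\<in>D \<times> D. A (fst p) (snd p) * (g (fst p) - h (snd p)))"
    by (rule sum.mono_neutral_left) (use S D in \<open>auto simp: supp2_def\<close>)
  also have "\<dots> = (\<Sum>u\<in>D. \<Sum>v\<in>D. A u v * (g u - h v))"
    by (simp add: sum.cartesian_product case_prod_beta)
  also have "\<dots> = (\<Sum>u\<in>D. \<Sum>v\<in>D. A u v * g u) - (\<Sum>u\<in>D. \<Sum>v\<in>D. A u v * h v)"
    by (simp add: right_diff_distrib sum_subtractf)
  also have "(\<Sum>u\<in>D. \<Sum>v\<in>D. A u v * g u) = (\<Sum>u\<in>D. g u * m1 u)"
    by (simp add: row sum_distrib_left mult.commute)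
  also have "(\<Sum>u\<in>D. \<Sum>v\<in>D. A u v * h v) = (\<Sum>v\<in>D. h v * m2 v)"
    by (subst sum.swap) (simp add: col sum_distrib_left mult.commute)
  finally show ?thesis .
qed

lemma sum_ind:
  fixes c :: real
  assumes "finite D" "T \<subseteq> D"
  shows "(\<Sum>v\<in>D. if v \<in> T then c else 0) = real (card T) * c"
proof -
  have "(\<Sum>v\<in>D. if v \<in> T then c else 0) = (\<Sum>v\<in>{v\<in>D. v \<in> T}. c)"
    by (rule sum.inter_filter[symmetric, OF assms(1)])
  also have "{v\<in>D. v \<in> T} = T" using assms by auto
  finally show ?thesis by simp
qed

lemma sum_row:
  fixes c :: real
  assumes "finite D" "T \<subseteq> D"
  shows "(\<Sum>v\<in>D. if u \<in> S \<and> v \<in> T then c else 0) = (if u \<in> S then real (card T) * c else 0)"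
proof (cases "u \<in> S")
  case True
  have "(\<Sum>v\<in>D. if v \<in> T then c else 0) = (\<Sum>v\<in>{v\<in>D. v \<in> T}. c)"
    by (rule sum.inter_filter[symmetric, OF assms(1)])
  also have "{v\<in>D. v \<in> T} = T" using assms by auto
  finally have "(\<Sum>v\<in>D. if v \<in> T then c else 0) = (\<Sum>v\<in>T. c)" .
  then show ?thesis using True by simp
qed simp

lemma sum_col:
  fixes c :: real
  assumes "finite D" "S \<subseteq> D"
  shows "(\<Sum>u\<in>D. if u \<in> S \<and> v \<in> T then c else 0) = (if v \<in> T then real (card S) * c else 0)"
proof (cases "v \<in> T")
  case True
  have "(\<Sum>v\<in>D. if v \<in> S then c else 0) = (\<Sum>v\<in>{v\<in>D. v \<in> S}. c)"
    by (rule sum.inter_filter[symmetric, OF assms(1)])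
  also have "{v\<in>D. v \<in> S} = S" using assms by auto
  finally have "(\<Sum>u\<in>D. if u \<in> S then c else 0) = (\<Sum>u\<in>S. c)" .
  then show ?thesis using True by simp
qed simp

lemma relpow0: fixes E :: "'a \<Rightarrow> 'a \<Rightarrow> bool" shows "(E ^^ 0) u v \<longleftrightarrow> u = v" by simp
lemma relpow1: fixes E :: "'a \<Rightarrow> 'a \<Rightarrow> bool" shows "(E ^^ 1) u v \<longleftrightarrow> E u v" by (simp add: relcompp_apply)
lemma relpow2: fixes E :: "'a \<Rightarrow> 'a \<Rightarrow> bool" shows "(E ^^ 2) u v \<longleftrightarrow> (\<exists>c. E u c \<and> E c v)"
  by (auto simp: numeral_2_eq_2 relcompp_apply)

lemma gdist_le: fixes E :: "'a \<Rightarrow> 'a \<Rightarrow> bool" shows "(E ^^ n) u v \<Longrightarrow> gdist E u v \<le> n"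
  unfolding gdist_def by (rule Least_le)

lemma gdist_ge: fixes E :: "'a \<Rightarrow> 'a \<Rightarrow> bool"
  assumes "E\<^sup>*\<^sup>* u v" "\<And>n. n < k \<Longrightarrow> \<not> (E ^^ n) u v"
  shows "k \<le> gdist E u v"
proof -
  obtain n where "(E ^^ n) u v" using assms(1) rtranclp_power by metis
  hence "(E ^^ gdist E u v) u v" unfolding gdist_def by (rule LeastI)
  thus ?thesis using assms(2) not_less by blast
qed


context
  fixes E :: "'a \<Rightarrow> 'a \<Rightarrow> bool" and x y :: 'a
  assumes G: "graph E" and xy: "E x y"
    and n3: "\<not> edge_in_cycle E x y 3" and n4: "\<not> edge_in_cycle E x y 4"
    and n5: "\<not> edge_in_cycle E x y 5"
begin

lemma Gsym: "E u v \<Longrightarrow> E v u" using G by (simp add: graph_def)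
lemma Girr: "\<not> E u u" using G by (simp add: graph_def)
lemma Gfin: "finite {v. E u v}" using G by (simp add: graph_def)
lemma Gconn: "E\<^sup>*\<^sup>* u v" using G by (simp add: graph_def)

lemma xny: "x \<noteq> y" using xy Girr by auto

lemma no_tri: "E x w \<Longrightarrow> E w y \<Longrightarrow> False"
proof -
  assume a: "E x w" "E w y"
  have d: "distinct [x, w, y]" using a xny Girr by auto
  have "\<forall>i. Suc i < 3 \<longrightarrow> E ([x, w, y] ! i) ([x, w, y] ! Suc i)"
  proof (intro allI impI)
    fix i :: nat assume "Suc i < 3"
    hence "i = 0 \<or> i = 1" by auto
    thus "E ([x, w, y] ! i) ([x, w, y] ! Suc i)" using a by auto
  qed
  hence "edge_in_cycle E x y 3" unfolding edge_in_cycle_def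
    using xy d by (intro conjI exI[of _ "[x, w, y]"]) auto
  thus False using n3 by simp
qed

lemma no_sq: "E x a \<Longrightarrow> E a b \<Longrightarrow> E b y \<Longrightarrow> a \<noteq> y \<Longrightarrow> b \<noteq> x \<Longrightarrow> False"
proof -
  assume a: "E x a" "E a b" "E b y" "a \<noteq> y" "b \<noteq> x"
  have d: "distinct [x, a, b, y]" using a xny Girr by auto
  have "\<forall>i. Suc i < 4 \<longrightarrow> E ([x, a, b, y] ! i) ([x, a, b, y] ! Suc i)"
  proof (intro allI impI)
    fix i :: nat assume "Suc i < 4"
    hence "i = 0 \<or> i = 1 \<or> i = 2" by auto
    thus "E ([x, a, b, y] ! i) ([x, a, b, y] ! Suc i)" using a by (auto simp: numeral_2_eq_2)
  qed
  hence "edge_in_cycle E x y 4" unfolding edge_in_cycle_def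
    using xy d by (intro conjI exI[of _ "[x, a, b, y]"]) auto
  thus False using n4 by simp
qed

lemma no_pent: "E x a \<Longrightarrow> E a c \<Longrightarrow> E c b \<Longrightarrow> E b y \<Longrightarrow> a \<noteq> y \<Longrightarrow> b \<noteq> x \<Longrightarrow> False"
proof -
  assume a: "E x a" "E a c" "E c b" "E b y" "a \<noteq> y" "b \<noteq> x"
  have "c \<noteq> x" using a no_tri by blast
  moreover have "c \<noteq> y" using a no_tri by blast
  moreover have "a \<noteq> b" using a no_tri by blast
  ultimately have d: "distinct [x, a, c, b, y]" using a xny Girr by auto
  have "\<forall>i. Suc i < 5 \<longrightarrow> E ([x, a, c, b, y] ! i) ([x, a, c, b, y] ! Suc i)"
  proof (intro allI impI)
    fix i :: nat assume "Suc i < 5"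
    hence "i = 0 \<or> i = 1 \<or> i = 2 \<or> i = 3" by auto
    thus "E ([x, a, c, b, y] ! i) ([x, a, c, b, y] ! Suc i)" using a
      by (auto simp: numeral_2_eq_2 numeral_3_eq_3)
  qed
  hence "edge_in_cycle E x y 5" unfolding edge_in_cycle_def
    using xy d by (intro conjI exI[of _ "[x, a, c, b, y]"]) auto
  thus False using n5 by simp
qed

lemma ge1: "u \<noteq> v \<Longrightarrow> 1 \<le> gdist E u v"
  by (rule gdist_ge[OF Gconn]) auto

lemma ge2: "u \<noteq> v \<Longrightarrow> \<not> E u v \<Longrightarrow> 2 \<le> gdist E u v"
proof (rule gdist_ge[OF Gconn])
  fix n :: nat assume "u \<noteq> v" "\<not> E u v" "n < 2"
  hence "n = 0 \<or> n = 1" by auto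
  thus "\<not> (E ^^ n) u v" using \<open>u \<noteq> v\<close> \<open>\<not> E u v\<close> by (auto simp del: relpowp.simps simp: relpow0 relpow1)
qed

lemma ge3: "u \<noteq> v \<Longrightarrow> \<not> E u v \<Longrightarrow> \<not> (\<exists>c. E u c \<and> E c v) \<Longrightarrow> 3 \<le> gdist E u v"
proof (rule gdist_ge[OF Gconn])
  fix n :: nat assume "u \<noteq> v" "\<not> E u v" "\<not> (\<exists>c. E u c \<and> E c v)" "n < 3"
  hence "n = 0 \<or> n = 1 \<or> n = 2" by auto
  thus "\<not> (E ^^ n) u v" using \<open>u \<noteq> v\<close> \<open>\<not> E u v\<close> \<open>\<not> (\<exists>c. E u c \<and> E c v)\<close>
    by (auto simp del: relpowp.simps simp: relpow0 relpow1 relpow2)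
qed

definition fpot :: "'a \<Rightarrow> real" where
  "fpot u = (if u = x then 1 else if u = y then 0 else if E x u then 2 else if E y u then -1 else 0)"

lemma lip:
  assumes u: "u = x \<or> E x u" and v: "v = y \<or> E y v"
  shows "fpot u - fpot v \<le> real (gdist E u v)"
proof -
  have fx: "fpot x = 1" and fy: "fpot y = 0" using xny by (auto simp: fpot_def)
  have fb: "fpot b = -1" if "E y b" "b \<noteq> x" for b
  proof -
    have "b \<noteq> y" using that Girr by auto
    moreover have "\<not> E x b" using that no_tri Gsym by blast
    ultimately show ?thesis using that by (simp add: fpot_def)
  qed
  have fa: "fpot a = 2" if "E x a" "a \<noteq> y" for a
  proof -
    have "a \<noteq> x" using that Girr by auto
    thus ?thesis using that by (simp add: fpot_def)
  qed
  show ?thesis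
  proof (cases "u = x")
    case True
    show ?thesis
    proof (cases "v = y")
      case True
      thus ?thesis using \<open>u = x\<close> fx fy ge1[OF xny] by simp
    next
      case False
      hence Ev: "E y v" using v by simp
      show ?thesis
      proof (cases "v = x")
        case True thus ?thesis using \<open>u = x\<close> by simp
      next
        case False
        have "\<not> E x v" using Ev no_tri Gsym by blast
        hence "2 \<le> gdist E x v" using ge2 False by auto
        thus ?thesis using \<open>u = x\<close> fx fb[OF Ev False] by simp
      qed
    qed
  next
    case ux: False
    hence Eu: "E x u" using u by simp
    show ?thesis
    proof (cases "u = y")
      case True
      show ?thesis
      proof (cases "v = y")
        case True thus ?thesis using \<open>u = y\<close> by simp
      next
        case False
        hence Ev: "E y v" using v by simp
        show ?thesis
        proof (cases "v = x")
          case True thus ?thesis using \<open>u = y\<close> fx fy by simp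
        next
          case False
          have "v \<noteq> y" using Ev Girr by auto
          hence "1 \<le> gdist E y v" using ge1 by auto
          thus ?thesis using \<open>u = y\<close> fy fb[OF Ev False] by simp
        qed
      qed
    next
      case uy: False
      have fu: "fpot u = 2" using fa[OF Eu uy] .
      show ?thesis
      proof (cases "v = y")
        case True
        have "\<not> E u y" using Eu no_tri by blast
        hence "2 \<le> gdist E u y" using ge2 uy by auto
        thus ?thesis using True fu fy by simp
      next
        case False
        hence Ev: "E y v" using v by simp
        show ?thesis
        proof (cases "v = x")
          case True
          have "1 \<le> gdist E u x" using ge1 ux by auto
          thus ?thesis using True fu fx by simp
        next
          case vx: False
          have Evy: "E v y" using Ev Gsym by blast
          have "u \<noteq> v" using Eu Evy no_tri by blast
          moreover have "\<not> E u v" using no_sq[OF Eu _ Evy uy vx] by blast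
          moreover have "\<not> (\<exists>c. E u c \<and> E c v)" using no_pent[OF Eu _ _ Evy uy vx] by blast
          ultimately have "3 \<le> gdist E u v" using ge3 by auto
          thus ?thesis using fu fb[OF Ev vx] by simp
        qed
      qed
    qed
  qed
qed

lemma mu_nz: "mu E \<alpha> z u \<noteq> 0 \<Longrightarrow> u = z \<or> E z u"
  by (auto simp: mu_def split: if_splits)

lemma transport_eq:
  assumes a1: "1/2 < \<alpha>" and a2: "\<alpha> < 1"
  shows "transport_dist E (mu E \<alpha> x) (mu E \<alpha> y) = 1 + (1 - \<alpha>) * (2 - 2 / deg E x - 2 / deg E y)"
proof -
  define Nx where "Nx = {v. E x v}"
  define Ny where "Ny = {v. E y v}"
  define Ax where "Ax = Nx - {y}"
  define By where "By = Ny - {x}"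
  define X where "X = {x}"
  define Y where "Y = {y}"
  define m where "m = deg E x"
  define n where "n = deg E y"
  define D where "D = X \<union> Y \<union> Nx \<union> Ny"
  have finNx: "finite Nx" and finNy: "finite Ny" using Gfin by (auto simp: Nx_def Ny_def)
  have finD: "finite D" using finNx finNy by (simp add: D_def X_def Y_def)
  have mN: "m = card Nx" and nN: "n = card Ny" by (simp_all add: m_def n_def deg_def Nx_def Ny_def)
  have yNx: "y \<in> Nx" and xNy: "x \<in> Ny" using xy Gsym by (auto simp: Nx_def Ny_def)
  have m1: "m \<ge> 1" using yNx finNx mN by (metis One_nat_def Suc_leI card_gt_0_iff empty_iff)
  have n1: "n \<ge> 1" using xNy finNy nN by (metis One_nat_def Suc_leI card_gt_0_iff empty_iff)
  have cAx: "real (card Ax) = real m - 1" using m1 yNx finNx by (simp add: Ax_def mN)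
  have cBy: "real (card By) = real n - 1" using n1 xNy finNy by (simp add: By_def nN)
  have XD: "X \<subseteq> D" and YD: "Y \<subseteq> D" and AxD: "Ax \<subseteq> D" and ByD: "By \<subseteq> D"
    by (auto simp: D_def Ax_def By_def)
  have xAx: "x \<notin> Ax" and yAx: "y \<notin> Ax" and xBy: "x \<notin> By" and yBy: "y \<notin> By"
    using Girr by (auto simp: Ax_def By_def Nx_def Ny_def)
  have AxBy: "u \<in> Ax \<Longrightarrow> u \<notin> By" for u using no_tri Gsym by (auto simp: Ax_def By_def Nx_def Ny_def)
  have mpos: "real m > 0" and npos: "real n > 0" using m1 n1 by auto
  define L where "L = (\<Sum>u\<in>D. fpot u * mu E \<alpha> x u) - (\<Sum>v\<in>D. fpot v * mu E \<alpha> y v)"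
  have p1: "fpot u * mu E \<alpha> x u = (if u \<in> X then \<alpha> else 0) + (if u \<in> Ax then 2 * (1 - \<alpha>) / m else 0)" for u
    using xny Girr by (auto simp: fpot_def mu_def X_def Ax_def Nx_def m_def)
  have p2: "fpot v * mu E \<alpha> y v = (if v \<in> X then (1 - \<alpha>) / n else 0) - (if v \<in> By then (1 - \<alpha>) / n else 0)" for v
    using xny Girr no_tri Gsym xy by (auto simp: fpot_def mu_def X_def By_def Ny_def n_def minus_divide_left)
  have L_val: "L = 1 + (1 - \<alpha>) * (2 - 2 / m - 2 / n)"
  proof -
    have "L = (\<Sum>u\<in>D. (if u \<in> X then \<alpha> else 0) + (if u \<in> Ax then 2 * (1 - \<alpha>) / m else 0))
       - (\<Sum>v\<in>D. (if v \<in> X then (1 - \<alpha>) / n else 0) - (if v \<in> By then (1 - \<alpha>) / n else 0))"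
      unfolding L_def p1 p2 ..
    also have "\<dots> = (real (card X) * \<alpha> + real (card Ax) * (2 * (1 - \<alpha>) / m))
        - (real (card X) * ((1 - \<alpha>) / n) - real (card By) * ((1 - \<alpha>) / n))"
      by (simp only: sum.distrib sum_subtractf sum_ind[OF finD XD] sum_ind[OF finD AxD] sum_ind[OF finD ByD])
    also have "\<dots> = 1 + (1 - \<alpha>) * (2 - 2 / m - 2 / n)"
      using mpos npos by (simp add: cAx cBy X_def field_simps)
    finally show ?thesis .
  qed

  have supp: "supp2 A \<subseteq> D \<times> D \<and> (\<forall>p\<in>supp2 A. (fst p = x \<or> E x (fst p)) \<and> (snd p = y \<or> E y (snd p)))"
    if c: "coupling (mu E \<alpha> x) (mu E \<alpha> y) A" for A
  proof -
    have "(u = x \<or> E x u) \<and> (v = y \<or> E y v)" if "A u v \<noteq> 0" for u v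
      using coupling_pos[OF c that] mu_nz by blast
    hence h: "\<forall>p\<in>supp2 A. (fst p = x \<or> E x (fst p)) \<and> (snd p = y \<or> E y (snd p))"
      by (simp add: supp2_def)
    have "supp2 A \<subseteq> D \<times> D"
    proof
      fix p assume "p \<in> supp2 A"
      hence "(fst p = x \<or> E x (fst p)) \<and> (snd p = y \<or> E y (snd p))" using h by blast
      hence "fst p \<in> D" "snd p \<in> D" by (auto simp: D_def X_def Y_def Nx_def Ny_def)
      thus "p \<in> D \<times> D" by (simp add: mem_Times_iff)
    qed
    thus ?thesis using h by blast
  qed
  have lower: "L \<le> transport_cost E A" if c: "coupling (mu E \<alpha> x) (mu E \<alpha> y) A" for A
  proof -
    have nn: "\<And>u v. 0 \<le> A u v" using c by (simp add: coupling_def)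
    have "L = (\<Sum>p\<in>supp2 A. A (fst p) (snd p) * (fpot (fst p) - fpot (snd p)))"
      unfolding L_def by (rule coupling_sum[OF c finD, symmetric]) (use supp[OF c] in blast)
    also have "\<dots> \<le> (\<Sum>p\<in>supp2 A. A (fst p) (snd p) * real (gdist E (fst p) (snd p)))"
    proof (rule sum_mono)
      fix p assume "p \<in> supp2 A"
      hence "fpot (fst p) - fpot (snd p) \<le> real (gdist E (fst p) (snd p))"
        using supp[OF c] lip by blast
      thus "A (fst p) (snd p) * (fpot (fst p) - fpot (snd p)) \<le> A (fst p) (snd p) * real (gdist E (fst p) (snd p))"
        using nn by (simp add: mult_left_mono)
    qed
    finally show ?thesis by (simp add: transport_cost_def)
  qed
  define A0 where "A0 = (\<lambda>u v. (if u \<in> X \<and> v \<in> X then (1 - \<alpha>) / n else 0)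
     + (if u \<in> Y \<and> v \<in> Y then (1 - \<alpha>) / m else 0)
     + (if u \<in> Ax \<and> v \<in> Y then (1 - \<alpha>) / m else 0)
     + (if u \<in> X \<and> v \<in> By then (1 - \<alpha>) / n else 0)
     + (if u \<in> X \<and> v \<in> Y then 2 * \<alpha> - 1 else 0))"
  have fm: "0 \<le> (1 - \<alpha>) / m" "(1 - \<alpha>) / m \<le> 1" using mpos m1 a2 a1 by (auto simp: field_simps)
  have fn: "0 \<le> (1 - \<alpha>) / n" "(1 - \<alpha>) / n \<le> 1" using npos n1 a2 a1 by (auto simp: field_simps)
  have blocks: "(u \<in> X \<and> v \<in> X) \<or> (u \<in> Y \<and> v \<in> Y) \<or> (u \<in> Ax \<and> v \<in> Y) \<or> (u \<in> X \<and> v \<in> By) \<or> (u \<in> X \<and> v \<in> Y)"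
    if "A0 u v \<noteq> 0" for u v
    using that by (auto simp: A0_def split: if_splits)
  have A0nn: "0 \<le> A0 u v \<and> A0 u v \<le> 1" for u v
    using fm fn a1 a2 xny xAx yAx xBy yBy
    by (auto simp: A0_def X_def Y_def)
  have A0D: "A0 u v \<noteq> 0 \<Longrightarrow> u \<in> D \<and> v \<in> D" for u v
    using blocks XD YD AxD ByD by blast
  have suppA0: "supp2 A0 \<subseteq> D \<times> D" using A0D by (auto simp: supp2_def)
  have row: "(\<Sum>v\<in>D. A0 u v) = mu E \<alpha> x u" for u
  proof -
    have "(\<Sum>v\<in>D. A0 u v) = (if u \<in> X then real (card X) * ((1 - \<alpha>) / n) else 0)
       + (if u \<in> Y then real (card Y) * ((1 - \<alpha>) / m) else 0)
       + (if u \<in> Ax then real (card Y) * ((1 - \<alpha>) / m) else 0)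
       + (if u \<in> X then real (card By) * ((1 - \<alpha>) / n) else 0)
       + (if u \<in> X then real (card Y) * (2 * \<alpha> - 1) else 0)"
      unfolding A0_def
      by (simp only: sum.distrib sum_row[OF finD XD] sum_row[OF finD YD] sum_row[OF finD ByD])
    also have "\<dots> = mu E \<alpha> x u"
      using xny Girr mpos npos xAx yAx xy
      by (auto simp: X_def Y_def cBy mu_def m_def Ax_def Nx_def field_simps)
    finally show ?thesis .
  qed
  have col: "(\<Sum>u\<in>D. A0 u v) = mu E \<alpha> y v" for v
  proof -
    have "(\<Sum>u\<in>D. A0 u v) = (if v \<in> X then real (card X) * ((1 - \<alpha>) / n) else 0)
       + (if v \<in> Y then real (card Y) * ((1 - \<alpha>) / m) else 0)
       + (if v \<in> Y then real (card Ax) * ((1 - \<alpha>) / m) else 0)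
       + (if v \<in> By then real (card X) * ((1 - \<alpha>) / n) else 0)
       + (if v \<in> Y then real (card X) * (2 * \<alpha> - 1) else 0)"
      unfolding A0_def
      by (simp only: sum.distrib sum_col[OF finD XD] sum_col[OF finD YD] sum_col[OF finD AxD])
    also have "\<dots> = mu E \<alpha> y v"
      using xny Girr mpos npos xBy yBy xy Gsym
      by (auto simp: X_def Y_def cAx mu_def n_def By_def Ny_def field_simps)
    finally show ?thesis .
  qed
  have cA0: "coupling (mu E \<alpha> x) (mu E \<alpha> y) A0"
    unfolding coupling_def
  proof (intro conjI allI)
    show "finite (supp2 A0)" using suppA0 finD by (meson finite_SigmaI finite_subset)
  next
    fix u v show "0 \<le> A0 u v" "A0 u v \<le> 1" using A0nn by auto
  next
    fix u show "(\<Sum>v\<in>{v. A0 u v \<noteq> 0}. A0 u v) = mu E \<alpha> x u"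
      using sum_nz_eq[OF finD, of "A0 u"] A0D row by auto
  next
    fix v show "(\<Sum>u\<in>{u. A0 u v \<noteq> 0}. A0 u v) = mu E \<alpha> y v"
      using sum_nz_eq[OF finD, of "\<lambda>u. A0 u v"] A0D col by auto
  qed
  have upper: "transport_cost E A0 \<le> L"
  proof -
    have "transport_cost E A0 = (\<Sum>p\<in>supp2 A0. A0 (fst p) (snd p) * real (gdist E (fst p) (snd p)))"
      by (simp add: transport_cost_def)
    also have "\<dots> \<le> (\<Sum>p\<in>supp2 A0. A0 (fst p) (snd p) * (fpot (fst p) - fpot (snd p)))"
    proof (rule sum_mono)
      fix p assume "p \<in> supp2 A0"
      then obtain u v where p: "p = (u, v)" and nz: "A0 u v \<noteq> 0" by (cases p) (auto simp: supp2_def)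
      have "real (gdist E u v) \<le> fpot u - fpot v"
      proof -
        have fx: "fpot x = 1" and fy: "fpot y = 0" using xny by (auto simp: fpot_def)
        from blocks[OF nz] show ?thesis
        proof (elim disjE conjE)
          assume "u \<in> X" "v \<in> X"
          thus ?thesis using gdist_le[where n=0 and u=x and v=x and E=E] by (simp add: X_def)
        next
          assume "u \<in> Y" "v \<in> Y"
          thus ?thesis using gdist_le[where n=0 and u=y and v=y and E=E] by (simp add: Y_def)
        next
          assume "u \<in> Ax" "v \<in> Y"
          hence Eu: "E x u" "u \<noteq> y" "u \<noteq> x" using Girr by (auto simp: Ax_def Nx_def)
          have "(E ^^ 2) u y" using Eu Gsym xy unfolding relpow2 by blast
          hence "gdist E u y \<le> 2" by (rule gdist_le)
          moreover have "fpot u = 2" using Eu by (simp add: fpot_def)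
          ultimately show ?thesis using \<open>v \<in> Y\<close> fy by (simp add: Y_def)
        next
          assume "u \<in> X" "v \<in> By"
          hence Ev: "E y v" "v \<noteq> y" "v \<noteq> x" "u = x" using Girr by (auto simp: By_def Ny_def X_def)
          have "(E ^^ 2) x v" using Ev xy unfolding relpow2 by blast
          hence "gdist E x v \<le> 2" by (rule gdist_le)
          moreover have "\<not> E x v" using Ev no_tri Gsym by blast
          hence "fpot v = -1" using Ev by (simp add: fpot_def)
          ultimately show ?thesis using Ev fx by simp
        next
          assume "u \<in> X" "v \<in> Y"
          moreover have "gdist E x y \<le> 1" using gdist_le[where n=1 and u=x and v=y and E=E] relpow1[where E=E and u=x and v=y] xy by simp
          ultimately show ?thesis using fx fy by (simp add: X_def Y_def)
        qed
      qed
      moreover have "0 \<le> A0 u v" using A0nn by auto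
      ultimately show "A0 (fst p) (snd p) * real (gdist E (fst p) (snd p)) \<le> A0 (fst p) (snd p) * (fpot (fst p) - fpot (snd p))"
        using p by (simp add: mult_left_mono)
    qed
    also have "\<dots> = L" unfolding L_def by (rule coupling_sum[OF cA0 finD suppA0])
    finally show ?thesis .
  qed
  have "transport_dist E (mu E \<alpha> x) (mu E \<alpha> y) = L"
    unfolding transport_dist_def
  proof (rule cInf_eq_minimum)
    show "L \<in> {transport_cost E A |A. coupling (mu E \<alpha> x) (mu E \<alpha> y) A}"
      using cA0 upper lower[OF cA0] by (intro CollectI exI[of _ A0]) auto
  next
    fix c assume "c \<in> {transport_cost E A |A. coupling (mu E \<alpha> x) (mu E \<alpha> y) A}"
    thus "L \<le> c" using lower by auto
  qed
  thus ?thesis using L_val by (simp add: m_def n_def)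
qed

lemma gdist_xy: "gdist E x y = 1"
proof -
  have "gdist E x y \<le> 1"
    using gdist_le[where n=1 and u=x and v=y and E=E] relpow1[where E=E and u=x and v=y] xy by simp
  moreover have "1 \<le> gdist E x y" using ge1[OF xny] .
  ultimately show ?thesis by simp
qed

lemma ricci_val: "ricci E x y = 2 / deg E x + 2 / deg E y - 2"
  unfolding ricci_def
proof (rule tendsto_Lim)
  show "\<not> trivial_limit (at_left (1::real))" by simp
  have "eventually (\<lambda>\<alpha>. \<alpha> \<in> {1/2<..<(1::real)}) (at_left 1)"
    by (rule eventually_at_left_real) simp
  hence "eventually (\<lambda>\<alpha>. kappa_alpha E \<alpha> x y / (1 - \<alpha>) = 2 / deg E x + 2 / deg E y - 2) (at_left 1)"
  proof (rule eventually_mono)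
    fix \<alpha> :: real assume "\<alpha> \<in> {1/2<..<1}"
    hence a: "1/2 < \<alpha>" "\<alpha> < 1" by auto
    have "kappa_alpha E \<alpha> x y = 1 - (1 + (1 - \<alpha>) * (2 - 2 / deg E x - 2 / deg E y))"
      unfolding kappa_alpha_def transport_eq[OF a] gdist_xy by simp
    thus "kappa_alpha E \<alpha> x y / (1 - \<alpha>) = 2 / deg E x + 2 / deg E y - 2"
      using a by (simp add: field_simps)
  qed
  thus "((\<lambda>\<alpha>. kappa_alpha E \<alpha> x y / (1 - \<alpha>)) \<longlongrightarrow> 2 / deg E x + 2 / deg E y - 2) (at_left 1)"
    by (rule tendsto_eventually)
qed

end

lemma nat_eq22: "(a::nat) * b = a + b \<Longrightarrow> 1 \<le> a \<Longrightarrow> 1 \<le> b \<Longrightarrow> a = 2 \<and> b = 2"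
proof -
  assume h: "a * b = a + b" "1 \<le> a" "1 \<le> b"
  obtain a' b' where ab: "a = Suc a'" "b = Suc b'" using h by (metis Suc_le_D One_nat_def)
  have "a' * b' = 1" using h(1) unfolding ab by (simp add: algebra_simps)
  hence "a' = 1" "b' = 1" by auto
  thus ?thesis using ab by simp
qed

theorem lemma5:
  fixes E :: "'a \<Rightarrow> 'a \<Rightarrow> bool"
  assumes "graph E"
    and "ricci_flat E"
    and "\<not> (\<exists>u v. E u v \<and> deg E u = 2 \<and> deg E v = 2)"
  shows "\<forall>u v. E u v \<longrightarrow>
           edge_in_cycle E u v 3 \<or> edge_in_cycle E u v 4 \<or> edge_in_cycle E u v 5"
proof (intro allI impI)
  fix u v assume uv: "E u v"
  show "edge_in_cycle E u v 3 \<or> edge_in_cycle E u v 4 \<or> edge_in_cycle E u v 5"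
  proof (rule ccontr)
    assume "\<not> ?thesis"
    hence n: "\<not> edge_in_cycle E u v 3" "\<not> edge_in_cycle E u v 4" "\<not> edge_in_cycle E u v 5" by auto
    have r: "ricci E u v = 2 / deg E u + 2 / deg E v - 2"
      by (rule ricci_val[OF assms(1) uv n])
    have "ricci E u v = 0" using assms(2) uv by (simp add: ricci_flat_def)
    hence eq: "2 / real (deg E u) + 2 / real (deg E v) - 2 = 0" using r by simp
    have vu: "E v u" using uv assms(1) by (simp add: graph_def)
    have du: "deg E u \<ge> 1"
    proof -
      have "finite {w. E u w}" using assms(1) by (simp add: graph_def)
      moreover have "v \<in> {w. E u w}" using uv by simp
      ultimately show ?thesis unfolding deg_def by (metis One_nat_def Suc_leI card_gt_0_iff empty_iff)
    qed
    have dv: "deg E v \<ge> 1"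
    proof -
      have "finite {w. E v w}" using assms(1) by (simp add: graph_def)
      moreover have "u \<in> {w. E v w}" using vu by simp
      ultimately show ?thesis unfolding deg_def by (metis One_nat_def Suc_leI card_gt_0_iff empty_iff)
    qed
    have "real (deg E u) * real (deg E v) = real (deg E u) + real (deg E v)"
      using eq du dv by (simp add: field_simps)
    hence "deg E u * deg E v = deg E u + deg E v" by (metis of_nat_add of_nat_eq_iff of_nat_mult)
    hence "deg E u = 2 \<and> deg E v = 2" using nat_eq22 du dv by blast
    thus False using assms(3) uv by blast
  qed
qed

end
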